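(* Let $E_{-2}\xrightarrow{\pi}E_{-1}\xrightarrow{\pi}E_0$ be a $3$-term complex of vector bundles over $M$, denoted $\mathcal E$. Then $(\mathrm{End}^{-2}(\mathcal E),\mathrm{End}^{-1}(\mathcal E),\mathfrak D_\pi(\mathcal E),\mathfrak p,\mathrm d,[\cdot,\cdot]_C)$ is a strict Lie $3$-algebroid (with $\mathfrak D_\pi(\mathcal E)$ in degree $0$, $\mathrm{End}^{-1}(\mathcal E)$ in degree $-1$, $\mathrm{End}^{-2}(\mathcal E)$ in degree $-2$, anchor $\mathfrak p$, $l_1=\mathrm d$, $l_2=[\cdot,\cdot]_C$, $l_3=l_4=0$).
   Context: $\mathfrak D(\mathcal E)$ is the vector bundle whose sections are triples $\mathfrak d=(\mathfrak d_0,\mathfrak d_1,\mathfrak d_2)$ of $\mathbb R$-linear maps $\mathfrak d_i:\Gamma(E_{-i})\to\Gamma(E_{-i})$ for which there is a vector field $X$ with $\mathfrak d_i(fe^i)=f\mathfrak d_i(e^i)+X(f)e^i$ for all $f\in C^\infty(M)$, $e^i\in\Gamma(E_{-i})$; $\mathfrak p(\mathfrak d)=X$. $\mathfrak D_\pi(\mathcal E)\subset\mathfrak D(\mathcal E)$ is the subbundle of those $\mathfrak d$ with $\mathfrak d_0\circ\pi=\pi\circ\mathfrak d_1$ and $\mathfrak d_1\circ\pi=\pi\circ\mathfrak d_2$. $\mathrm{End}^{-1}(\mathcal E)=\mathrm{Hom}(E_0,E_{-1})\oplus\mathrm{Hom}(E_{-1},E_{-2})$, $\mathrm{End}^{-2}(\mathcal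 E)=\mathrm{Hom}(E_0,E_{-2})$. The differential: $\mathrm d(\theta^2)=\pi\circ\theta^2-\theta^2\circ\pi$ for $\theta^2\in\Gamma(\mathrm{Hom}(E_0,E_{-2}))$, and $\mathrm d(\theta^1)=\pi\circ\theta^1+\theta^1\circ\pi$ for $\theta^1\in\Gamma(\mathrm{End}^{-1}(\mathcal E))$ (all compositions taken componentwise, meaningful ones only). The bracket: $[\mathfrak d,\mathfrak t]_C=\mathfrak d\circ\mathfrak t-\mathfrak t\circ\mathfrak d$, $[\mathfrak d,\theta^i]_C=\mathfrak d\circ\theta^i-\theta^i\circ\mathfrak d$ for $\theta^i\in\Gamma(\mathrm{End}^{-i}(\mathcal E))$, $[\theta^1,\vartheta^1]_C=\theta^1\circ\vartheta^1+\vartheta^1\circ\theta^1$, extended by graded skew-symmetry, all other brackets zero. Split Lie $n$-algebroid: a graded vector bundle $\mathcal A=A_0\oplus\cdots\oplus A_{-n+1}$ ($A_{-i}$ in degree $-i$) with anchor $a:A_0\to TM$ and graded skew-symmetric brackets $l_i:\Gamma(\wedge^i\mathcal A)\to\Gamma(\mathcal A)$ of degree $2-i$, $1\le i\le n+1$, such that $\sum_{i+j=k+1}(-1)^{i(j-1)}\sum_{\sigma\in Sh^{-1}_{i,k-i}}\mathrm{sgn}(\sigma)\epsilon(\sigma)l_j(l_i(X_{\sigma(1)},\dots,X_{\sigma(i)}),X_{\sigma(i+1)},\dots,X_{\sigma(k)})=0$ for all $k$ (unshuffles, Koszul sign $\epsilon$), $l_2(X^0,fX)=fl_2(X^0,X)+a(X^0)(f)X$,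 and $l_i$ is $C^\infty(M)$-linear for $i\ne2$. A strict Lie $3$-algebroid is a Lie $3$-algebroid with $l_3=l_4=0$. *)

theory Defs
  imports Complex_Main "HOL-Combinatorics.Permutations" "HOL-Library.Function_Algebras"
    "HOL-Library.Product_Plus"
begin

(* ===== Algebraic model of sections =====
   'r  : the commutative R-algebra C^\<infinity>(M) of smooth functions
   a C^\<infinity>(M)-module (space of sections) is an abelian group 'e with an action sm.
   Vector fields = R-linear derivations of C^\<infinity>(M). *)

definition is_module :: "('r::comm_ring_1 \<Rightarrow> 'e::ab_group_add \<Rightarrow> 'e) \<Rightarrow> bool" where
  "is_module sm \<longleftrightarrow>
     (\<forall>f g e. sm (f + g) e = sm f e + sm g e) \<and>
     (\<forall>f e e'. sm f (e + e') = sm f e + sm f e') \<and>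
     (\<forall>f g e. sm (f * g) e = sm f (sm g e)) \<and>
     (\<forall>e. sm 1 e = e)"

(* C^\<infinity>(M)-linear maps of sections = sections of Hom bundles / bundle maps *)
definition module_hom :: "('r::comm_ring_1 \<Rightarrow> 'e::ab_group_add \<Rightarrow> 'e) \<Rightarrow>
    ('r \<Rightarrow> 'e'::ab_group_add \<Rightarrow> 'e') \<Rightarrow> ('e \<Rightarrow> 'e') \<Rightarrow> bool" where
  "module_hom sm sm' \<phi> \<longleftrightarrow> (\<forall>x y. \<phi> (x + y) = \<phi> x + \<phi> y) \<and> (\<forall>f x. \<phi> (sm f x) = sm' f (\<phi> x))"

definition is_vector_field :: "('r::{comm_ring_1,real_algebra_1} \<Rightarrow> 'r) \<Rightarrow> bool" where
  "is_vector_field X \<longleftrightarrow>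
     (\<forall>f g. X (f + g) = X f + X g) \<and>
     (\<forall>c f. X (of_real c * f) = of_real c * X f) \<and>
     (\<forall>f g. X (f * g) = f * X g + X f * g)"

definition is_der_op :: "('r::{comm_ring_1,real_algebra_1} \<Rightarrow> 'e::ab_group_add \<Rightarrow> 'e) \<Rightarrow>
    ('r \<Rightarrow> 'r) \<Rightarrow> ('e \<Rightarrow> 'e) \<Rightarrow> bool" where
  "is_der_op sm X d \<longleftrightarrow>
     (\<forall>x y. d (x + y) = d x + d y) \<and>
     (\<forall>c x. d (sm (of_real c) x) = sm (of_real c) (d x)) \<and>
     (\<forall>f x. d (sm f x) = sm f (d x) + sm (X f) x)"

(* ===== Generic split Lie n-algebroid (on sections) =====
   sm : C^\<infinity>(M)-action on \<Gamma>(A);  G i = \<Gamma>(A_{-i}) inside \<Gamma>(A);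
   a  : anchor (\<Gamma>(A_0) \<rightarrow> vector fields);  l i : the i-ary bracket, on lists of length i. *)

definition pm :: "int \<Rightarrow> 'a::ab_group_add \<Rightarrow> 'a" where
  "pm s x = (if 0 \<le> s then x else - x)"

definition sections :: "nat \<Rightarrow> (nat \<Rightarrow> 'a::ab_group_add set) \<Rightarrow> 'a set" where
  "sections n G = {(\<Sum>i<n. xs i) | xs. \<forall>i<n. xs i \<in> G i}"

definition homog :: "(nat \<Rightarrow> 'a set) \<Rightarrow> 'a list \<Rightarrow> nat list \<Rightarrow> bool" where
  "homog G xs ds \<longleftrightarrow> length ds = length xs \<and> (\<forall>j<length xs. xs ! j \<in> G (ds ! j))"

definition permute_list_by :: "(nat \<Rightarrow> nat) \<Rightarrow> 'a list \<Rightarrow> 'a list" where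
  "permute_list_by \<sigma> xs = map (\<lambda>p. xs ! \<sigma> p) [0..<length xs]"

(* (i, k-i)-unshuffles, 0-indexed *)
definition unshuffles :: "nat \<Rightarrow> nat \<Rightarrow> (nat \<Rightarrow> nat) set" where
  "unshuffles i k = {\<sigma>. \<sigma> permutes {..<k} \<and>
      (\<forall>p q. p < q \<and> q < i \<longrightarrow> \<sigma> p < \<sigma> q) \<and>
      (\<forall>p q. i \<le> p \<and> p < q \<and> q < k \<longrightarrow> \<sigma> p < \<sigma> q)}"

(* Koszul sign of \<sigma> for elements of degrees -(ds!j):
   X_\<sigma>(1) ... X_\<sigma>(k) = koszul ds \<sigma> * X_1 ... X_k in the graded symmetric algebra *)
definition koszul :: "nat list \<Rightarrow> (nat \<Rightarrow> nat) \<Rightarrow> int" where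
  "koszul ds \<sigma> = (\<Prod>(p, q) \<in> {(p, q). p < q \<and> q < length ds \<and> \<sigma> q < \<sigma> p}.
                     (-1) ^ (ds ! \<sigma> p * ds ! \<sigma> q))"

definition jacobiator :: "nat \<Rightarrow> (nat \<Rightarrow> 'a list \<Rightarrow> 'a::ab_group_add) \<Rightarrow> 'a list \<Rightarrow> nat list \<Rightarrow> 'a" where
  "jacobiator n l xs ds =
    (let k = length xs in
     \<Sum>i \<in> {i. 1 \<le> i \<and> i \<le> k \<and> i \<le> n + 1 \<and> k + 1 - i \<le> n + 1}.
       \<Sum>\<sigma> \<in> unshuffles i k.
         (let ys = permute_list_by \<sigma> xs in
          pm ((-1) ^ (i * (k - i)) * sign \<sigma> * koszul ds \<sigma>)
             (l (k + 1 - i) (l i (take i ys) # drop i ys))))"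

definition split_lie_n_algebroid :: "nat \<Rightarrow> ('r::{comm_ring_1,real_algebra_1} \<Rightarrow> 'a::ab_group_add \<Rightarrow> 'a) \<Rightarrow>
    (nat \<Rightarrow> 'a set) \<Rightarrow> ('a \<Rightarrow> 'r \<Rightarrow> 'r) \<Rightarrow> (nat \<Rightarrow> 'a list \<Rightarrow> 'a) \<Rightarrow> bool" where
  "split_lie_n_algebroid n sm G a l \<longleftrightarrow>
     \<comment> \<open>graded module \<Gamma>(A) = \<Gamma>(A_0) + ... + \<Gamma>(A_{-n+1}) (direct sum)\<close>
     is_module sm \<and>
     (\<forall>i. 0 \<in> G i \<and> (\<forall>x\<in>G i. \<forall>y\<in>G i. x + y \<in> G i) \<and> (\<forall>f. \<forall>x\<in>G i. sm f x \<in> G i)) \<and>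
     (\<forall>i\<ge>n. G i = {0}) \<and>
     (\<forall>xs. (\<forall>i<n. xs i \<in> G i) \<and> (\<Sum>i<n. xs i) = 0 \<longrightarrow> (\<forall>i<n. xs i = 0)) \<and>
     \<comment> \<open>anchor: a bundle map A_0 \<rightarrow> TM\<close>
     (\<forall>x\<in>G 0. is_vector_field (a x)) \<and>
     (\<forall>x\<in>G 0. \<forall>y\<in>G 0. a (x + y) = (\<lambda>f. a x f + a y f)) \<and>
     (\<forall>g. \<forall>x\<in>G 0. a (sm g x) = (\<lambda>f. g * a x f)) \<and>
     \<comment> \<open>brackets l_i, 1 \<le> i \<le> n+1: R-multilinear on \<Gamma>(\<wedge>^i A), C^\<infinity>-linear for i \<noteq> 2\<close>
     (\<forall>i\<in>{1..n+1}. \<forall>xs. length xs = i \<and> set xs \<subseteq> sections n G \<longrightarrow>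
        l i xs \<in> sections n G \<and>
        (\<forall>p<i. \<forall>y\<in>sections n G. l i (xs[p := xs ! p + y]) = l i xs + l i (xs[p := y])) \<and>
        (\<forall>p<i. \<forall>c. l i (xs[p := sm (of_real c) (xs ! p)]) = sm (of_real c) (l i xs)) \<and>
        (i \<noteq> 2 \<longrightarrow> (\<forall>p<i. \<forall>f. l i (xs[p := sm f (xs ! p)]) = sm f (l i xs)))) \<and>
     \<comment> \<open>l_i has degree 2 - i\<close>
     (\<forall>i\<in>{1..n+1}. \<forall>xs ds. homog G xs ds \<and> length xs = i \<longrightarrow>
        (if 2 \<le> sum_list ds + i \<and> sum_list ds + i - 2 < n
         then l i xs \<in> G (sum_list ds + i - 2) else l i xs = 0)) \<and>
     \<comment> \<open>graded skew-symmetry\<close>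
     (\<forall>i\<in>{1..n+1}. \<forall>xs ds \<sigma>. homog G xs ds \<and> length xs = i \<and> \<sigma> permutes {..<i} \<longrightarrow>
        l i (permute_list_by \<sigma> xs) = pm (sign \<sigma> * koszul ds \<sigma>) (l i xs)) \<and>
     \<comment> \<open>higher Jacobi identities, for all k\<close>
     (\<forall>xs ds. homog G xs ds \<and> length xs \<ge> 1 \<longrightarrow> jacobiator n l xs ds = 0) \<and>
     \<comment> \<open>Leibniz rule\<close>
     (\<forall>x\<in>G 0. \<forall>y\<in>sections n G. \<forall>f. l 2 [x, sm f y] = sm f (l 2 [x, y]) + sm (a x f) y)"

definition strict_lie_3_algebroid :: "('r::{comm_ring_1,real_algebra_1} \<Rightarrow> 'a::ab_group_add \<Rightarrow> 'a) \<Rightarrow>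
    (nat \<Rightarrow> 'a set) \<Rightarrow> ('a \<Rightarrow> 'r \<Rightarrow> 'r) \<Rightarrow> (nat \<Rightarrow> 'a list \<Rightarrow> 'a) \<Rightarrow> bool" where
  "strict_lie_3_algebroid sm G a l \<longleftrightarrow>
     split_lie_n_algebroid 3 sm G a l \<and>
     (\<forall>xs. set xs \<subseteq> sections 3 G \<longrightarrow> l 3 xs = 0 \<and> l 4 xs = 0)"

definition complex3 :: "('r::{comm_ring_1,real_algebra_1} \<Rightarrow> 'e0::ab_group_add \<Rightarrow> 'e0) \<Rightarrow>
    ('r \<Rightarrow> 'e1::ab_group_add \<Rightarrow> 'e1) \<Rightarrow> ('r \<Rightarrow> 'e2::ab_group_add \<Rightarrow> 'e2) \<Rightarrow>
    ('e1 \<Rightarrow> 'e0) \<Rightarrow> ('e2 \<Rightarrow> 'e1) \<Rightarrow> bool" where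
  "complex3 sm0 sm1 sm2 p1 p2 \<longleftrightarrow>
     is_module sm0 \<and> is_module sm1 \<and> is_module sm2 \<and>
     module_hom sm1 sm0 p1 \<and> module_hom sm2 sm1 p2 \<and> (\<forall>e. p1 (p2 e) = 0)"

(* \<Gamma>(D \<oplus> End^{-1} \<oplus> End^{-2}); an element of \<Gamma>(D) is (X, d0, d1, d2) with X = \<pp>(d) *)
type_synonym ('r, 'e0, 'e1, 'e2) ends =
  "(('r \<Rightarrow> 'r) \<times> ('e0 \<Rightarrow> 'e0) \<times> ('e1 \<Rightarrow> 'e1) \<times> ('e2 \<Rightarrow> 'e2))
   \<times> (('e0 \<Rightarrow> 'e1) \<times> ('e1 \<Rightarrow> 'e2)) \<times> ('e0 \<Rightarrow> 'e2)"

definition Dpi :: "('r::{comm_ring_1,real_algebra_1} \<Rightarrow> 'e0::ab_group_add \<Rightarrow> 'e0) \<Rightarrow>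
    ('r \<Rightarrow> 'e1::ab_group_add \<Rightarrow> 'e1) \<Rightarrow> ('r \<Rightarrow> 'e2::ab_group_add \<Rightarrow> 'e2) \<Rightarrow>
    ('e1 \<Rightarrow> 'e0) \<Rightarrow> ('e2 \<Rightarrow> 'e1) \<Rightarrow>
    (('r \<Rightarrow> 'r) \<times> ('e0 \<Rightarrow> 'e0) \<times> ('e1 \<Rightarrow> 'e1) \<times> ('e2 \<Rightarrow> 'e2)) set" where
  "Dpi sm0 sm1 sm2 p1 p2 = {(X, d0, d1, d2). is_vector_field X \<and>
      is_der_op sm0 X d0 \<and> is_der_op sm1 X d1 \<and> is_der_op sm2 X d2 \<and>
      (\<forall>e. d0 (p1 e) = p1 (d1 e)) \<and> (\<forall>e. d1 (p2 e) = p2 (d2 e))}"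

definition GE :: "('r::{comm_ring_1,real_algebra_1} \<Rightarrow> 'e0::ab_group_add \<Rightarrow> 'e0) \<Rightarrow>
    ('r \<Rightarrow> 'e1::ab_group_add \<Rightarrow> 'e1) \<Rightarrow> ('r \<Rightarrow> 'e2::ab_group_add \<Rightarrow> 'e2) \<Rightarrow>
    ('e1 \<Rightarrow> 'e0) \<Rightarrow> ('e2 \<Rightarrow> 'e1) \<Rightarrow> nat \<Rightarrow> ('r, 'e0, 'e1, 'e2) ends set" where
  "GE sm0 sm1 sm2 p1 p2 i =
     (if i = 0 then {(D, 0, 0) | D. D \<in> Dpi sm0 sm1 sm2 p1 p2}
      else if i = 1 then {(0, (ta, tb), 0) | ta tb. module_hom sm0 sm1 ta \<and> module_hom sm1 sm2 tb}
      else if i = 2 then {(0, 0, t) | t. module_hom sm0 sm2 t}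
      else {0})"

definition smE :: "('r::{comm_ring_1,real_algebra_1} \<Rightarrow> 'e0::ab_group_add \<Rightarrow> 'e0) \<Rightarrow>
    ('r \<Rightarrow> 'e1::ab_group_add \<Rightarrow> 'e1) \<Rightarrow> ('r \<Rightarrow> 'e2::ab_group_add \<Rightarrow> 'e2) \<Rightarrow>
    'r \<Rightarrow> ('r, 'e0, 'e1, 'e2) ends \<Rightarrow> ('r, 'e0, 'e1, 'e2) ends" where
  "smE sm0 sm1 sm2 f x =
     (case x of ((X, d0, d1, d2), (ta, tb), t) \<Rightarrow>
       ((\<lambda>g. f * X g, \<lambda>e. sm0 f (d0 e), \<lambda>e. sm1 f (d1 e), \<lambda>e. sm2 f (d2 e)),
        (\<lambda>e. sm1 f (ta e), \<lambda>e. sm2 f (tb e)), \<lambda>e. sm2 f (t e)))"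

definition anchorE :: "('r, 'e0, 'e1, 'e2) ends \<Rightarrow> 'r \<Rightarrow> 'r" where
  "anchorE x = fst (fst x)"

(* l_1 = d, extended additively: d(\<theta>^2) = \<pi>\<theta>^2 - \<theta>^2\<pi>, d(\<theta>^1) = \<pi>\<theta>^1 + \<theta>^1\<pi>, d = 0 on D_\<pi> *)
definition dE :: "('e1::ab_group_add \<Rightarrow> 'e0::ab_group_add) \<Rightarrow> ('e2::ab_group_add \<Rightarrow> 'e1) \<Rightarrow>
    ('r::ab_group_add, 'e0, 'e1, 'e2) ends \<Rightarrow> ('r, 'e0, 'e1, 'e2) ends" where
  "dE p1 p2 x =
     (case x of (_, (ta, tb), t) \<Rightarrow>
       ((0, \<lambda>e. p1 (ta e), \<lambda>e. ta (p1 e) + p2 (tb e), \<lambda>e. tb (p2 e)),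
        (\<lambda>e. p2 (t e), \<lambda>e. - t (p1 e)), 0))"

definition bracketE :: "('r::ab_group_add, 'e0::ab_group_add, 'e1::ab_group_add, 'e2::ab_group_add) ends \<Rightarrow>
    ('r, 'e0, 'e1, 'e2) ends \<Rightarrow> ('r, 'e0, 'e1, 'e2) ends" where
  "bracketE x y =
     (case x of ((X, d0, d1, d2), (ta, tb), t) \<Rightarrow>
      case y of ((X', d0', d1', d2'), (ta', tb'), t') \<Rightarrow>
       ((\<lambda>f. X (X' f) - X' (X f), \<lambda>e. d0 (d0' e) - d0' (d0 e),
         \<lambda>e. d1 (d1' e) - d1' (d1 e), \<lambda>e. d2 (d2' e) - d2' (d2 e)),
        (\<lambda>e. (d1 (ta' e) - ta' (d0 e)) - (d1' (ta e) - ta (d0' e)),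
         \<lambda>e. (d2 (tb' e) - tb' (d1 e)) - (d2' (tb e) - tb (d1' e))),
        \<lambda>e. (d2 (t' e) - t' (d0 e)) - (d2' (t e) - t (d0' e))
             + (tb (ta' e) + tb' (ta e))))"

definition lE :: "('e1::ab_group_add \<Rightarrow> 'e0::ab_group_add) \<Rightarrow> ('e2::ab_group_add \<Rightarrow> 'e1) \<Rightarrow>
    nat \<Rightarrow> ('r::ab_group_add, 'e0, 'e1, 'e2) ends list \<Rightarrow> ('r, 'e0, 'e1, 'e2) ends" where
  "lE p1 p2 i xs =
     (if i = 1 then dE p1 p2 (xs ! 0) else if i = 2 then bracketE (xs ! 0) (xs ! 1) else 0)"

end

theory Submission
  imports Defs
begin


lemma addv_0:
  fixes f :: "'a::ab_group_add \<Rightarrow> 'b::ab_group_add"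
  assumes a: "\<And>x y. f (x+y) = f x + f y" shows "f 0 = (0::'b::ab_group_add)"
proof -
  have "f 0 + f 0 = f 0 + 0" using a[of 0 0] by simp
  then show ?thesis by (rule add_left_imp_eq)
qed
lemma addv_minus:
  fixes f :: "'a::ab_group_add \<Rightarrow> 'b::ab_group_add"
  assumes a: "\<And>x y. f (x+y) = f x + f y" shows "f (-x) = - (f x::'b::ab_group_add)"
proof -
  have "f x + f (-x) = 0" using a[of x "-x"] addv_0[OF a] by simp
  then show ?thesis by (simp add: eq_neg_iff_add_eq_0 add.commute)
qed
lemma addv_diff:
  fixes f :: "'a::ab_group_add \<Rightarrow> 'b::ab_group_add"
  assumes a: "\<And>x y. f (x+y) = f x + f y" shows "f (x - y) = f x - (f y::'b::ab_group_add)"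
  using a[of x "-y"] addv_minus[OF a, of y] by simp

lemma vf_rules:
  assumes "is_vector_field X"
  shows "X (f+g) = X f + X g" "X 0 = 0" "X (-f) = - X f" "X (f - g) = X f - X g"
proof -
  have a: "\<And>f g. X (f+g) = X f + X g" using assms by (simp add: is_vector_field_def)
  show "X (f+g) = X f + X g" "X 0 = 0" "X (-f) = - X f" "X (f - g) = X f - X g"
    using addv_0[of X, OF a] addv_minus[of X, OF a] addv_diff[of X, OF a] a by auto
qed

lemma der_rules:
  assumes "is_der_op sm X d"
  shows "d (x+y) = d x + d y" "d 0 = 0" "d (-x) = - d x" "d (x - y) = d x - d y"
proof -
  have a: "\<And>x y. d (x+y) = d x + d y" using assms by (simp add: is_der_op_def)
  show "d (x+y) = d x + d y" "d 0 = 0" "d (-x) = - d x" "d (x - y) = d x - d y"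
    using addv_0[of d, OF a] addv_minus[of d, OF a] addv_diff[of d, OF a] a by auto
qed

lemma hom_rules:
  assumes "module_hom sm sm' d"
  shows "d (x+y) = d x + d y" "d 0 = 0" "d (-x) = - d x" "d (x - y) = d x - d y"
proof -
  have a: "\<And>x y. d (x+y) = d x + d y" using assms by (simp add: module_hom_def)
  show "d (x+y) = d x + d y" "d 0 = 0" "d (-x) = - d x" "d (x - y) = d x - d y"
    using addv_0[of d, OF a] addv_minus[of d, OF a] addv_diff[of d, OF a] a by auto
qed

lemma hom_sm: "module_hom sm sm' d \<Longrightarrow> d (sm f x) = sm' f (d x)"
  unfolding module_hom_def by blast

lemma der_sm: "is_der_op sm X d \<Longrightarrow> d (sm f x) = sm f (d x) + sm (X f) x"
  unfolding is_der_op_def by blast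

lemma der_smr: "is_der_op sm X d \<Longrightarrow> d (sm (of_real c) x) = sm (of_real c) (d x)"
  unfolding is_der_op_def by blast

lemma vf_mult: "is_vector_field X \<Longrightarrow> X (f * g) = f * X g + X f * g"
  unfolding is_vector_field_def by blast

lemma vf_real: "is_vector_field X \<Longrightarrow> X (of_real c * f) = of_real c * X f"
  unfolding is_vector_field_def by blast

lemma vf_const: assumes "is_vector_field X" shows "X (of_real c) = 0"
proof -
  have "X (1*1) = 1 * X 1 + X 1 * 1" using vf_mult[OF assms] .
  then have "X 1 = 0" by simp
  moreover have "X (of_real c * 1) = of_real c * X 1" using vf_real[OF assms] .
  ultimately show ?thesis by simp
qed

lemma mod_rules:
  assumes "is_module sm"
  shows "sm f (x+y) = sm f x + sm f y" "sm (f+g) x = sm f x + sm g x" "sm (f*g) x = sm f (sm g x)"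
    "sm 1 x = x" "sm f 0 = 0" "sm 0 x = 0" "sm f (-x) = - sm f x" "sm (-f) x = - sm f x"
    "sm f (x-y) = sm f x - sm f y" "sm (f-g) x = sm f x - sm g x"
proof -
  have a: "\<And>x y. sm f (x+y) = sm f x + sm f y" using assms by (simp add: is_module_def)
  have b: "\<And>f g. sm (f+g) x = sm f x + sm g x" using assms by (simp add: is_module_def)
  show "sm f (x+y) = sm f x + sm f y" "sm (f+g) x = sm f x + sm g x" "sm (f*g) x = sm f (sm g x)"
    "sm 1 x = x" using assms by (auto simp: is_module_def)
  show "sm f 0 = 0" "sm f (-x) = - sm f x" "sm f (x-y) = sm f x - sm f y"
    using addv_0[of "sm f", OF a] addv_minus[of "sm f", OF a] addv_diff[of "sm f", OF a] by auto
  show "sm 0 x = 0" "sm (-f) x = - sm f x" "sm (f-g) x = sm f x - sm g x"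
    using addv_0[of "\<lambda>f. sm f x", OF b] addv_minus[of "\<lambda>f. sm f x", OF b] addv_diff[of "\<lambda>f. sm f x", OF b] by auto
qed

lemma sm_comm: assumes "is_module sm" shows "sm f (sm g x) = sm g (sm f x)"
proof -
  have "sm f (sm g x) = sm (f*g) x" using mod_rules(3)[OF assms] by simp
  also have "\<dots> = sm (g*f) x" by (simp add: mult.commute)
  also have "\<dots> = sm g (sm f x)" using mod_rules(3)[OF assms] by simp
  finally show ?thesis .
qed

lemma hom_comp: "module_hom s1 s2 f \<Longrightarrow> module_hom s2 s3 g \<Longrightarrow> module_hom s1 s3 (\<lambda>e. g (f e))"
  by (simp add: module_hom_def)

lemma hom_add2: assumes "module_hom s s' f" "module_hom s s' g" "is_module s'"
  shows "module_hom s s' (\<lambda>e. f e + g e)"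
  using assms(1,2) unfolding module_hom_def by (simp add: mod_rules[OF assms(3)] algebra_simps)

lemma hom_diff2: assumes "module_hom s s' f" "module_hom s s' g" "is_module s'"
  shows "module_hom s s' (\<lambda>e. f e - g e)"
  using assms(1,2) unfolding module_hom_def by (simp add: mod_rules[OF assms(3)] algebra_simps)

lemma hom_neg: assumes "module_hom s s' f" "is_module s'" shows "module_hom s s' (\<lambda>e. - f e)"
  using assms(1) unfolding module_hom_def by (simp add: mod_rules[OF assms(2)])

lemma hom_zero: assumes "is_module s'" shows "module_hom s s' (\<lambda>e. 0)"
  unfolding module_hom_def by (simp add: mod_rules[OF assms])

lemma hom_zero': assumes "is_module s'" shows "module_hom s s' 0"
  unfolding module_hom_def by (simp add: mod_rules[OF assms])

lemma hom_scale: assumes "module_hom s s' f" "is_module s'" shows "module_hom s s' (\<lambda>e. s' g (f e))"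
  using assms(1) unfolding module_hom_def by (simp add: mod_rules[OF assms(2)] sm_comm[OF assms(2)])

lemma hom_der:
  assumes "is_module s'" "module_hom s s' ta" "is_der_op s X d" "is_der_op s' X d'"
  shows "module_hom s s' (\<lambda>e. d' (ta e) - ta (d e))"
  using assms unfolding module_hom_def
  by (simp add: der_rules[OF assms(3)] der_rules[OF assms(4)] der_sm[OF assms(3)] der_sm[OF assms(4)]
      hom_rules[OF assms(2)] mod_rules[OF assms(1)] algebra_simps)

lemma der0: assumes "is_module s" "module_hom s s \<phi>" shows "is_der_op s 0 \<phi>"
  using assms(2) unfolding is_der_op_def module_hom_def by (simp add: mod_rules[OF assms(1)])

lemma der0': assumes "is_module s" "module_hom s s \<phi>" shows "is_der_op s (\<lambda>f. 0) \<phi>"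
  using assms(2) unfolding is_der_op_def module_hom_def by (simp add: mod_rules[OF assms(1)])

lemma vf0: "is_vector_field (0::'r::{comm_ring_1,real_algebra_1} \<Rightarrow> 'r)"
  by (simp add: is_vector_field_def)

lemma vf_comm:
  assumes "is_vector_field X" "is_vector_field Y"
  shows "is_vector_field (\<lambda>f. X (Y f) - Y (X f))"
  unfolding is_vector_field_def
  by (simp add: vf_rules[OF assms(1)] vf_rules[OF assms(2)] vf_mult[OF assms(1)] vf_mult[OF assms(2)]
      vf_const[OF assms(1)] vf_const[OF assms(2)] algebra_simps)

lemma der_comm:
  assumes m: "is_module s" and hX: "is_vector_field X" "is_vector_field Y"
    and hd: "is_der_op s X d" "is_der_op s Y e"
  shows "is_der_op s (\<lambda>f. X (Y f) - Y (X f)) (\<lambda>x. d (e x) - e (d x))"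
  unfolding is_der_op_def
  by (simp add: vf_const[OF hX(1)] vf_const[OF hX(2)] vf_rules[OF hX(1)] vf_rules[OF hX(2)] der_rules[OF hd(1)] der_rules[OF hd(2)] der_sm[OF hd(1)] der_sm[OF hd(2)]
     mod_rules[OF m] algebra_simps)

lemma vf_addf:
  assumes "is_vector_field X" "is_vector_field Y"
  shows "is_vector_field (X + Y)"
  unfolding is_vector_field_def
  by (simp add: vf_rules[OF assms(1)] vf_rules[OF assms(2)] vf_mult[OF assms(1)] vf_mult[OF assms(2)]
      vf_const[OF assms(1)] vf_const[OF assms(2)] algebra_simps)

lemma der_addf:
  assumes m: "is_module s" and hX: "is_vector_field X" "is_vector_field Y"
    and hd: "is_der_op s X d" "is_der_op s Y e"
  shows "is_der_op s (X + Y) (d + e)"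
  unfolding is_der_op_def
  by (simp add: der_rules[OF hd(1)] der_rules[OF hd(2)] der_sm[OF hd(1)] der_sm[OF hd(2)]
     vf_const[OF hX(1)] vf_const[OF hX(2)] mod_rules[OF m] algebra_simps)

lemma vf_scale:
  assumes "is_vector_field X"
  shows "is_vector_field (\<lambda>g. f * X g)"
  unfolding is_vector_field_def by (simp add: vf_rules[OF assms] vf_mult[OF assms] vf_const[OF assms] algebra_simps)

lemma der_scale:
  assumes m: "is_module s" and hX: "is_vector_field X" and hd: "is_der_op s X d"
  shows "is_der_op s (\<lambda>g. f * X g) (\<lambda>e. s f (d e))"
  unfolding is_der_op_def
  by (simp add: der_rules[OF hd] der_sm[OF hd] vf_const[OF hX] mod_rules[OF m] sm_comm[OF m] algebra_simps)

lemma pm_pow: "pm ((-1::int)^n) x = (if even n then x else - x)"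
  by (simp add: pm_def)

lemma pm_mpow: "pm (- ((-1::int)^n)) x = (if even n then - x else x)"
  by (simp add: pm_def)

definition mk0 :: "('r \<Rightarrow> 'r) \<Rightarrow> ('e0 \<Rightarrow> 'e0) \<Rightarrow> ('e1 \<Rightarrow> 'e1) \<Rightarrow> ('e2 \<Rightarrow> 'e2) \<Rightarrow> ('r::zero, 'e0::zero, 'e1::zero, 'e2::zero) ends"
  where "mk0 X d0 d1 d2 = ((X, d0, d1, d2), (0, 0), 0)"
definition mk1 :: "('e0 \<Rightarrow> 'e1) \<Rightarrow> ('e1 \<Rightarrow> 'e2) \<Rightarrow> ('r::zero, 'e0::zero, 'e1::zero, 'e2::zero) ends"
  where "mk1 ta tb = ((0, 0, 0, 0), (ta, tb), 0)"
definition mk2 :: "('e0 \<Rightarrow> 'e2) \<Rightarrow> ('r::zero, 'e0::zero, 'e1::zero, 'e2::zero) ends"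
  where "mk2 t = ((0, 0, 0, 0), (0, 0), t)"


definition degc :: "nat \<Rightarrow> ('r::zero \<Rightarrow> 'r) \<Rightarrow> ('e0::zero \<Rightarrow> 'e0) \<Rightarrow> ('e1::zero \<Rightarrow> 'e1) \<Rightarrow> ('e2::zero \<Rightarrow> 'e2)
  \<Rightarrow> ('e0 \<Rightarrow> 'e1) \<Rightarrow> ('e1 \<Rightarrow> 'e2) \<Rightarrow> ('e0 \<Rightarrow> 'e2) \<Rightarrow> bool" where
  "degc n X d0 d1 d2 ta tb t \<longleftrightarrow> (n \<noteq> 0 \<longrightarrow> X = 0 \<and> d0 = 0 \<and> d1 = 0 \<and> d2 = 0) \<and>
     (n \<noteq> 1 \<longrightarrow> ta = 0 \<and> tb = 0) \<and> (n \<noteq> 2 \<longrightarrow> t = 0)"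

definition hdeg :: "nat \<Rightarrow> ('r::zero, 'e0::zero, 'e1::zero, 'e2::zero) ends \<Rightarrow> bool" where
  "hdeg n x = (case x of ((X, a0, a1, a2), (ua, ub), u) \<Rightarrow> degc n X a0 a1 a2 ua ub u)"

lemma ends_exhaust:
  obtains X a0 a1 a2 ua ub u where "x = ((X, a0, a1, a2), (ua, ub), u)"
  by (metis prod.collapse)

lemma hdeg_big: "hdeg n x \<Longrightarrow> 3 \<le> n \<Longrightarrow> x = 0"
  by (cases x rule: ends_exhaust) (simp add: hdeg_def degc_def zero_prod_def)

lemma hdeg_zero: "hdeg n 0"
  by (simp add: hdeg_def degc_def zero_prod_def)

lemma deg_cases: "(n::nat) = 0 \<or> n = 1 \<or> n = 2 \<or> (n \<noteq> 0 \<and> n \<noteq> 1 \<and> n \<noteq> 2)"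
  by auto

locale cx3 =
  fixes sm0 :: "'r::{comm_ring_1,real_algebra_1} \<Rightarrow> 'e0::ab_group_add \<Rightarrow> 'e0"
    and sm1 :: "'r \<Rightarrow> 'e1::ab_group_add \<Rightarrow> 'e1"
    and sm2 :: "'r \<Rightarrow> 'e2::ab_group_add \<Rightarrow> 'e2"
    and p1 :: "'e1 \<Rightarrow> 'e0" and p2 :: "'e2 \<Rightarrow> 'e1"
  assumes cx: "complex3 sm0 sm1 sm2 p1 p2"
begin

lemma m0: "is_module sm0" and m1: "is_module sm1" and m2: "is_module sm2"
  and hp1: "module_hom sm1 sm0 p1" and hp2: "module_hom sm2 sm1 p2" and pp: "p1 (p2 e) = 0"
  using cx by (auto simp: complex3_def)

lemmas PR = hom_rules[OF hp1] hom_rules[OF hp2] pp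
lemmas MR = mod_rules[OF m0] mod_rules[OF m1] mod_rules[OF m2]

definition secc :: "('r \<Rightarrow> 'r) \<Rightarrow> ('e0 \<Rightarrow> 'e0) \<Rightarrow> ('e1 \<Rightarrow> 'e1) \<Rightarrow> ('e2 \<Rightarrow> 'e2)
  \<Rightarrow> ('e0 \<Rightarrow> 'e1) \<Rightarrow> ('e1 \<Rightarrow> 'e2) \<Rightarrow> ('e0 \<Rightarrow> 'e2) \<Rightarrow> bool" where
  "secc X a0 a1 a2 ua ub u \<longleftrightarrow> is_vector_field X \<and> is_der_op sm0 X a0 \<and> is_der_op sm1 X a1 \<and>
     is_der_op sm2 X a2 \<and> (\<forall>e. a0 (p1 e) = p1 (a1 e)) \<and> (\<forall>e. a1 (p2 e) = p2 (a2 e)) \<and>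
     module_hom sm0 sm1 ua \<and> module_hom sm1 sm2 ub \<and> module_hom sm0 sm2 u"

definition sec :: "('r, 'e0, 'e1, 'e2) ends \<Rightarrow> bool" where
  "sec x = (case x of ((X, a0, a1, a2), (ua, ub), u) \<Rightarrow> secc X a0 a1 a2 ua ub u)"

lemma secc_rules:
  assumes "secc X a0 a1 a2 ua ub u"
  shows "X (f+g) = X f + X g" "X 0 = 0" "X (-f) = - X f" "X (f - g) = X f - X g"
    "a0 (x0+y0) = a0 x0 + a0 y0" "a0 0 = 0" "a0 (-x0) = - a0 x0" "a0 (x0 - y0) = a0 x0 - a0 y0"
    "a1 (x1+y1) = a1 x1 + a1 y1" "a1 0 = 0" "a1 (-x1) = - a1 x1" "a1 (x1 - y1) = a1 x1 - a1 y1"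
    "a2 (x2+y2) = a2 x2 + a2 y2" "a2 0 = 0" "a2 (-x2) = - a2 x2" "a2 (x2 - y2) = a2 x2 - a2 y2"
    "ua (x0+y0) = ua x0 + ua y0" "ua 0 = 0" "ua (-x0) = - ua x0" "ua (x0 - y0) = ua x0 - ua y0"
    "ub (x1+y1) = ub x1 + ub y1" "ub 0 = 0" "ub (-x1) = - ub x1" "ub (x1 - y1) = ub x1 - ub y1"
    "u (x0+y0) = u x0 + u y0" "u 0 = 0" "u (-x0) = - u x0" "u (x0 - y0) = u x0 - u y0"
    "a0 (p1 x1) = p1 (a1 x1)" "a1 (p2 x2) = p2 (a2 x2)"
proof -
  have h: "is_vector_field X" "is_der_op sm0 X a0" "is_der_op sm1 X a1" "is_der_op sm2 X a2"
     "\<forall>e. a0 (p1 e) = p1 (a1 e)" "\<forall>e. a1 (p2 e) = p2 (a2 e)"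
     "module_hom sm0 sm1 ua" "module_hom sm1 sm2 ub" "module_hom sm0 sm2 u"
    using assms unfolding secc_def by auto
  show "X (f+g) = X f + X g" "X 0 = 0" "X (-f) = - X f" "X (f - g) = X f - X g"
    "a0 (x0+y0) = a0 x0 + a0 y0" "a0 0 = 0" "a0 (-x0) = - a0 x0" "a0 (x0 - y0) = a0 x0 - a0 y0"
    "a1 (x1+y1) = a1 x1 + a1 y1" "a1 0 = 0" "a1 (-x1) = - a1 x1" "a1 (x1 - y1) = a1 x1 - a1 y1"
    "a2 (x2+y2) = a2 x2 + a2 y2" "a2 0 = 0" "a2 (-x2) = - a2 x2" "a2 (x2 - y2) = a2 x2 - a2 y2"
    "ua (x0+y0) = ua x0 + ua y0" "ua 0 = 0" "ua (-x0) = - ua x0" "ua (x0 - y0) = ua x0 - ua y0"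
    "ub (x1+y1) = ub x1 + ub y1" "ub 0 = 0" "ub (-x1) = - ub x1" "ub (x1 - y1) = ub x1 - ub y1"
    "u (x0+y0) = u x0 + u y0" "u 0 = 0" "u (-x0) = - u x0" "u (x0 - y0) = u x0 - u y0"
    "a0 (p1 x1) = p1 (a1 x1)" "a1 (p2 x2) = p2 (a2 x2)"
    using vf_rules[OF h(1)] der_rules[OF h(2)] der_rules[OF h(3)] der_rules[OF h(4)]
      hom_rules[OF h(7)] hom_rules[OF h(8)] hom_rules[OF h(9)] h(5,6) by auto
qed

lemma secc_smr:
  assumes "secc X a0 a1 a2 ua ub u"
  shows "X (of_real c * f) = of_real c * X f"
    "a0 (sm0 (of_real c) x0) = sm0 (of_real c) (a0 x0)"
    "a1 (sm1 (of_real c) x1) = sm1 (of_real c) (a1 x1)"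
    "a2 (sm2 (of_real c) x2) = sm2 (of_real c) (a2 x2)"
    "ua (sm0 r x0) = sm1 r (ua x0)" "ub (sm1 r x1) = sm2 r (ub x1)" "u (sm0 r x0) = sm2 r (u x0)"
  using assms unfolding secc_def by (auto simp: vf_real der_smr hom_sm)

lemma secc_smf:
  assumes "secc X a0 a1 a2 ua ub u"
  shows "X (f * g) = f * X g + X f * g" "X (of_real c) = 0"
    "a0 (sm0 r x0) = sm0 r (a0 x0) + sm0 (X r) x0"
    "a1 (sm1 r x1) = sm1 r (a1 x1) + sm1 (X r) x1"
    "a2 (sm2 r x2) = sm2 r (a2 x2) + sm2 (X r) x2"
    "ua (sm0 r x0) = sm1 r (ua x0)" "ub (sm1 r x1) = sm2 r (ub x1)" "u (sm0 r x0) = sm2 r (u x0)"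
  using assms unfolding secc_def by (auto simp: vf_mult vf_const der_sm hom_sm)

lemma G_eq: "GE sm0 sm1 sm2 p1 p2 n = {x. sec x \<and> hdeg n x}"
proof (intro set_eqI iffI)
  fix x assume "x \<in> GE sm0 sm1 sm2 p1 p2 n"
  then show "x \<in> {x. sec x \<and> hdeg n x}"
    by (auto simp: GE_def Dpi_def sec_def hdeg_def degc_def secc_def zero_prod_def
        vf0 der0 hom_zero' m0 m1 m2 PR hom_rules(2) split: if_splits)
next
  fix x assume "x \<in> {x. sec x \<and> hdeg n x}"
  then show "x \<in> GE sm0 sm1 sm2 p1 p2 n"
    by (cases x rule: ends_exhaust)
      (auto simp: GE_def Dpi_def sec_def hdeg_def degc_def secc_def zero_prod_def)
qed

end


lemma hom_addf: assumes "module_hom s s' f" "module_hom s s' g" "is_module s'"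
  shows "module_hom s s' (f + g)"
  using hom_add2[OF assms] by (simp add: plus_fun_def)

context cx3 begin

lemma sec_obtain:
  assumes "sec x"
  obtains X a0 a1 a2 ua ub u where "x = ((X, a0, a1, a2), (ua, ub), u)" "secc X a0 a1 a2 ua ub u"
  using assms by (cases x rule: ends_exhaust) (simp add: sec_def)

lemma sec_0: "sec 0"
  by (simp add: sec_def secc_def zero_prod_def vf0 der0 hom_zero' m0 m1 m2 PR)

lemma sec_add: assumes "sec x" "sec y" shows "sec (x + y)"
proof -
  obtain X a0 a1 a2 ua ub u where x: "x = ((X, a0, a1, a2), (ua, ub), u)" and sx: "secc X a0 a1 a2 ua ub u"
    by (rule sec_obtain[OF assms(1)])
  obtain Y b0 b1 b2 va vb v where y: "y = ((Y, b0, b1, b2), (va, vb), v)" and sy: "secc Y b0 b1 b2 va vb v"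
    by (rule sec_obtain[OF assms(2)])
  show ?thesis using sx sy unfolding x y
    by (simp add: sec_def secc_def vf_addf der_addf m0 m1 m2 hom_addf PR)
qed

lemma sec_sm: assumes "sec x" shows "sec (smE sm0 sm1 sm2 f x)"
proof -
  obtain X a0 a1 a2 ua ub u where x: "x = ((X, a0, a1, a2), (ua, ub), u)" and sx: "secc X a0 a1 a2 ua ub u"
    by (rule sec_obtain[OF assms(1)])
  show ?thesis using sx unfolding x
    by (simp add: smE_def sec_def secc_def vf_scale der_scale m0 m1 m2 hom_scale hom_sm[OF hp1] hom_sm[OF hp2])
qed

lemma sec_d: assumes "sec x" shows "sec (dE p1 p2 x)"
proof -
  obtain X a0 a1 a2 ua ub u where x: "x = ((X, a0, a1, a2), (ua, ub), u)" and sx: "secc X a0 a1 a2 ua ub u"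
    by (rule sec_obtain[OF assms(1)])
  have h: "module_hom sm0 sm1 ua" "module_hom sm1 sm2 ub" "module_hom sm0 sm2 u"
    using sx by (auto simp: secc_def)
  have "is_der_op sm0 0 (\<lambda>e. p1 (ua e))" by (intro der0 m0 hom_comp[OF h(1) hp1])
  moreover have "is_der_op sm1 0 (\<lambda>e. ua (p1 e) + p2 (ub e))"
    by (intro der0 m1 hom_add2 hom_comp[OF hp1 h(1)] hom_comp[OF h(2) hp2])
  moreover have "is_der_op sm2 0 (\<lambda>e. ub (p2 e))" by (intro der0 m2 hom_comp[OF hp2 h(2)])
  moreover have "module_hom sm0 sm1 (\<lambda>e. p2 (u e))" by (rule hom_comp[OF h(3) hp2])
  moreover have "module_hom sm1 sm2 (\<lambda>e. - u (p1 e))" by (intro hom_neg m2 hom_comp[OF hp1 h(3)])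
  ultimately show ?thesis unfolding x
    by (simp add: dE_def sec_def secc_def vf0 hom_zero' m2 PR secc_rules[OF sx])
qed

lemma sec_B: assumes "sec x" "sec y" shows "sec (bracketE x y)"
proof -
  obtain X a0 a1 a2 ua ub u where x: "x = ((X, a0, a1, a2), (ua, ub), u)" and sx: "secc X a0 a1 a2 ua ub u"
    by (rule sec_obtain[OF assms(1)])
  obtain Y b0 b1 b2 va vb v where y: "y = ((Y, b0, b1, b2), (va, vb), v)" and sy: "secc Y b0 b1 b2 va vb v"
    by (rule sec_obtain[OF assms(2)])
  have hx: "is_vector_field X" "is_der_op sm0 X a0" "is_der_op sm1 X a1" "is_der_op sm2 X a2"
     "module_hom sm0 sm1 ua" "module_hom sm1 sm2 ub" "module_hom sm0 sm2 u"
    using sx by (auto simp: secc_def)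
  have hy: "is_vector_field Y" "is_der_op sm0 Y b0" "is_der_op sm1 Y b1" "is_der_op sm2 Y b2"
     "module_hom sm0 sm1 va" "module_hom sm1 sm2 vb" "module_hom sm0 sm2 v"
    using sy by (auto simp: secc_def)
  have "module_hom sm0 sm1 (\<lambda>e. (a1 (va e) - va (a0 e)) - (b1 (ua e) - ua (b0 e)))"
    by (intro hom_diff2 m1 hom_der[OF m1 hy(5) hx(2) hx(3)] hom_der[OF m1 hx(5) hy(2) hy(3)])
  moreover have "module_hom sm1 sm2 (\<lambda>e. (a2 (vb e) - vb (a1 e)) - (b2 (ub e) - ub (b1 e)))"
    by (intro hom_diff2 m2 hom_der[OF m2 hy(6) hx(3) hx(4)] hom_der[OF m2 hx(6) hy(3) hy(4)])
  moreover have "module_hom sm0 sm2 (\<lambda>e. (a2 (v e) - v (a0 e)) - (b2 (u e) - u (b0 e)) + (ub (va e) + vb (ua e)))"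
    by (intro hom_add2 hom_diff2 m2 hom_der[OF m2 hy(7) hx(2) hx(4)] hom_der[OF m2 hx(7) hy(2) hy(4)]
        hom_comp[OF hy(5) hx(6)] hom_comp[OF hx(5) hy(6)])
  moreover have "is_vector_field (\<lambda>f. X (Y f) - Y (X f))" by (rule vf_comm[OF hx(1) hy(1)])
  moreover have "is_der_op sm0 (\<lambda>f. X (Y f) - Y (X f)) (\<lambda>e. a0 (b0 e) - b0 (a0 e))"
    by (rule der_comm[OF m0 hx(1) hy(1) hx(2) hy(2)])
  moreover have "is_der_op sm1 (\<lambda>f. X (Y f) - Y (X f)) (\<lambda>e. a1 (b1 e) - b1 (a1 e))"
    by (rule der_comm[OF m1 hx(1) hy(1) hx(3) hy(3)])
  moreover have "is_der_op sm2 (\<lambda>f. X (Y f) - Y (X f)) (\<lambda>e. a2 (b2 e) - b2 (a2 e))"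
    by (rule der_comm[OF m2 hx(1) hy(1) hx(4) hy(4)])
  ultimately show ?thesis unfolding x y
    by (simp add: bracketE_def sec_def secc_def PR secc_rules[OF sx] secc_rules[OF sy])
qed

lemma smE_0: "smE sm0 sm1 sm2 f 0 = 0"
  by (simp add: smE_def zero_prod_def MR fun_eq_iff)

lemma mod_smE: "is_module (smE sm0 sm1 sm2)"
  unfolding is_module_def
proof (intro conjI allI)
  fix f g :: 'r and x y :: "('r, 'e0, 'e1, 'e2) ends"
  show "smE sm0 sm1 sm2 (f + g) x = smE sm0 sm1 sm2 f x + smE sm0 sm1 sm2 g x"
    by (cases x rule: ends_exhaust) (simp add: smE_def MR fun_eq_iff algebra_simps)
  show "smE sm0 sm1 sm2 f (x + y) = smE sm0 sm1 sm2 f x + smE sm0 sm1 sm2 f y"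
    by (cases x rule: ends_exhaust, cases y rule: ends_exhaust) (simp add: smE_def MR fun_eq_iff algebra_simps)
  show "smE sm0 sm1 sm2 (f * g) x = smE sm0 sm1 sm2 f (smE sm0 sm1 sm2 g x)"
    by (cases x rule: ends_exhaust) (simp add: smE_def MR fun_eq_iff algebra_simps)
  show "smE sm0 sm1 sm2 1 x = x"
    by (cases x rule: ends_exhaust) (simp add: smE_def MR fun_eq_iff algebra_simps)
qed

lemma d_add: "dE p1 p2 (x + y) = dE p1 p2 x + dE p1 p2 y"
  by (cases x rule: ends_exhaust, cases y rule: ends_exhaust) (simp add: dE_def PR fun_eq_iff algebra_simps)

lemma d_0: "dE p1 p2 0 = 0"
  by (simp add: dE_def PR fun_eq_iff zero_prod_def)

lemma d_sm: "dE p1 p2 (smE sm0 sm1 sm2 f x) = smE sm0 sm1 sm2 f (dE p1 p2 x)"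
  by (cases x rule: ends_exhaust)
    (simp add: dE_def smE_def PR MR hom_sm[OF hp1] hom_sm[OF hp2] fun_eq_iff algebra_simps)

lemma B_0l: assumes "sec y" shows "bracketE 0 y = 0"
proof -
  obtain Y b0 b1 b2 va vb v where y: "y = ((Y, b0, b1, b2), (va, vb), v)" and sy: "secc Y b0 b1 b2 va vb v"
    by (rule sec_obtain[OF assms(1)])
  show ?thesis unfolding y by (simp add: bracketE_def zero_prod_def secc_rules[OF sy] fun_eq_iff)
qed

lemma B_0r: assumes "sec y" shows "bracketE y 0 = 0"
proof -
  obtain Y b0 b1 b2 va vb v where y: "y = ((Y, b0, b1, b2), (va, vb), v)" and sy: "secc Y b0 b1 b2 va vb v"
    by (rule sec_obtain[OF assms(1)])
  show ?thesis unfolding y by (simp add: bracketE_def zero_prod_def secc_rules[OF sy] fun_eq_iff)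
qed

lemma B_add1: assumes "sec x" "sec y" "sec z" shows "bracketE (x + y) z = bracketE x z + bracketE y z"
proof -
  obtain X a0 a1 a2 ua ub u where x: "x = ((X, a0, a1, a2), (ua, ub), u)" and sx: "secc X a0 a1 a2 ua ub u"
    by (rule sec_obtain[OF assms(1)])
  obtain Y b0 b1 b2 va vb v where y: "y = ((Y, b0, b1, b2), (va, vb), v)" and sy: "secc Y b0 b1 b2 va vb v"
    by (rule sec_obtain[OF assms(2)])
  obtain Z c0 c1 c2 wa wb w where z: "z = ((Z, c0, c1, c2), (wa, wb), w)" and sz: "secc Z c0 c1 c2 wa wb w"
    by (rule sec_obtain[OF assms(3)])
  show ?thesis unfolding x y z
    by (simp add: bracketE_def secc_rules[OF sx] secc_rules[OF sy] secc_rules[OF sz] fun_eq_iff algebra_simps)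
qed

lemma B_add2: assumes "sec x" "sec y" "sec z" shows "bracketE x (y + z) = bracketE x y + bracketE x z"
proof -
  obtain X a0 a1 a2 ua ub u where x: "x = ((X, a0, a1, a2), (ua, ub), u)" and sx: "secc X a0 a1 a2 ua ub u"
    by (rule sec_obtain[OF assms(1)])
  obtain Y b0 b1 b2 va vb v where y: "y = ((Y, b0, b1, b2), (va, vb), v)" and sy: "secc Y b0 b1 b2 va vb v"
    by (rule sec_obtain[OF assms(2)])
  obtain Z c0 c1 c2 wa wb w where z: "z = ((Z, c0, c1, c2), (wa, wb), w)" and sz: "secc Z c0 c1 c2 wa wb w"
    by (rule sec_obtain[OF assms(3)])
  show ?thesis unfolding x y z
    by (simp add: bracketE_def secc_rules[OF sx] secc_rules[OF sy] secc_rules[OF sz] fun_eq_iff algebra_simps)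
qed

lemma B_r1: assumes "sec x" "sec y"
  shows "bracketE (smE sm0 sm1 sm2 (of_real c) x) y = smE sm0 sm1 sm2 (of_real c) (bracketE x y)"
proof -
  obtain X a0 a1 a2 ua ub u where x: "x = ((X, a0, a1, a2), (ua, ub), u)" and sx: "secc X a0 a1 a2 ua ub u"
    by (rule sec_obtain[OF assms(1)])
  obtain Y b0 b1 b2 va vb v where y: "y = ((Y, b0, b1, b2), (va, vb), v)" and sy: "secc Y b0 b1 b2 va vb v"
    by (rule sec_obtain[OF assms(2)])
  show ?thesis unfolding x y
    by (simp add: bracketE_def smE_def secc_rules[OF sx] secc_rules[OF sy] secc_smr[OF sx] secc_smr[OF sy]
        MR fun_eq_iff algebra_simps)
qed

lemma B_r2: assumes "sec x" "sec y"
  shows "bracketE x (smE sm0 sm1 sm2 (of_real c) y) = smE sm0 sm1 sm2 (of_real c) (bracketE x y)"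
proof -
  obtain X a0 a1 a2 ua ub u where x: "x = ((X, a0, a1, a2), (ua, ub), u)" and sx: "secc X a0 a1 a2 ua ub u"
    by (rule sec_obtain[OF assms(1)])
  obtain Y b0 b1 b2 va vb v where y: "y = ((Y, b0, b1, b2), (va, vb), v)" and sy: "secc Y b0 b1 b2 va vb v"
    by (rule sec_obtain[OF assms(2)])
  show ?thesis unfolding x y
    by (simp add: bracketE_def smE_def secc_rules[OF sx] secc_rules[OF sy] secc_smr[OF sx] secc_smr[OF sy]
        MR fun_eq_iff algebra_simps)
qed

lemma leib: assumes "sec x" "hdeg 0 x" "sec y"
  shows "bracketE x (smE sm0 sm1 sm2 f y) = smE sm0 sm1 sm2 f (bracketE x y) + smE sm0 sm1 sm2 (anchorE x f) y"
proof -
  obtain X a0 a1 a2 ua ub u where x: "x = ((X, a0, a1, a2), (ua, ub), u)" and sx: "secc X a0 a1 a2 ua ub u"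
    by (rule sec_obtain[OF assms(1)])
  obtain Y b0 b1 b2 va vb v where y: "y = ((Y, b0, b1, b2), (va, vb), v)" and sy: "secc Y b0 b1 b2 va vb v"
    by (rule sec_obtain[OF assms(3)])
  have "ua = 0" "ub = 0" "u = 0" using assms(2) unfolding x by (auto simp: hdeg_def degc_def)
  then show ?thesis unfolding x y
    by (simp add: bracketE_def smE_def anchorE_def secc_rules[OF sx] secc_rules[OF sy] secc_smf[OF sx] secc_smf[OF sy]
        MR fun_eq_iff algebra_simps)
qed

end


context cx3 begin

lemma jac1: assumes "sec x" shows "dE p1 p2 (dE p1 p2 x) = 0"
proof -
  obtain X a0 a1 a2 ua ub u where x: "x = ((X, a0, a1, a2), (ua, ub), u)" and sx: "secc X a0 a1 a2 ua ub u"
    by (rule sec_obtain[OF assms(1)])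
  show ?thesis unfolding x
    by (simp add: dE_def zero_prod_def secc_rules[OF sx] PR fun_eq_iff)
qed

lemma jac2: assumes "sec x" "sec y" "hdeg a x" "hdeg b y"
  shows "pm (-1) (bracketE (dE p1 p2 x) y) + pm ((-1)^(b*a)) (bracketE (dE p1 p2 y) x)
     + pm 1 (dE p1 p2 (bracketE x y)) = 0"
proof -
  obtain X a0 a1 a2 ua ub u where x: "x = ((X, a0, a1, a2), (ua, ub), u)" and sx: "secc X a0 a1 a2 ua ub u"
    by (rule sec_obtain[OF assms(1)])
  obtain Y b0 b1 b2 va vb v where y: "y = ((Y, b0, b1, b2), (va, vb), v)" and sy: "secc Y b0 b1 b2 va vb v"
    by (rule sec_obtain[OF assms(2)])
  have dg: "degc a X a0 a1 a2 ua ub u" "degc b Y b0 b1 b2 va vb v"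
    using assms(3,4) unfolding x y by (simp_all add: hdeg_def)
  note R = secc_rules[OF sx] secc_rules[OF sy] PR
  show ?thesis using deg_cases[of a] deg_cases[of b] dg unfolding x y degc_def
    by (elim disjE conjE) (simp_all add: R bracketE_def dE_def pm_def zero_prod_def fun_eq_iff algebra_simps)
qed

lemma jac3: assumes "sec x" "sec y" "sec z" "hdeg a x" "hdeg b y" "hdeg c z"
  shows "pm 1 (bracketE (bracketE x y) z) + pm (- ((-1)^(c*b))) (bracketE (bracketE x z) y)
     + pm ((-1)^(b*a) * (-1)^(c*a)) (bracketE (bracketE y z) x) = 0"
proof -
  obtain X a0 a1 a2 ua ub u where x: "x = ((X, a0, a1, a2), (ua, ub), u)" and sx: "secc X a0 a1 a2 ua ub u"
    by (rule sec_obtain[OF assms(1)])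
  obtain Y b0 b1 b2 va vb v where y: "y = ((Y, b0, b1, b2), (va, vb), v)" and sy: "secc Y b0 b1 b2 va vb v"
    by (rule sec_obtain[OF assms(2)])
  obtain Z c0 c1 c2 wa wb w where z: "z = ((Z, c0, c1, c2), (wa, wb), w)" and sz: "secc Z c0 c1 c2 wa wb w"
    by (rule sec_obtain[OF assms(3)])
  have dg: "degc a X a0 a1 a2 ua ub u" "degc b Y b0 b1 b2 va vb v" "degc c Z c0 c1 c2 wa wb w"
    using assms(4,5,6) unfolding x y z by (simp_all add: hdeg_def)
  note R = secc_rules[OF sx] secc_rules[OF sy] secc_rules[OF sz] PR
  show ?thesis using deg_cases[of a] deg_cases[of b] deg_cases[of c] dg unfolding x y z degc_def
    by (elim disjE conjE) (simp_all add: R bracketE_def pm_def zero_prod_def fun_eq_iff algebra_simps)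
qed

lemma skew: assumes "sec x" "sec y" "hdeg a x" "hdeg b y"
  shows "bracketE y x = pm (- ((-1)^(b*a))) (bracketE x y)"
proof -
  obtain X a0 a1 a2 ua ub u where x: "x = ((X, a0, a1, a2), (ua, ub), u)" and sx: "secc X a0 a1 a2 ua ub u"
    by (rule sec_obtain[OF assms(1)])
  obtain Y b0 b1 b2 va vb v where y: "y = ((Y, b0, b1, b2), (va, vb), v)" and sy: "secc Y b0 b1 b2 va vb v"
    by (rule sec_obtain[OF assms(2)])
  have dg: "degc a X a0 a1 a2 ua ub u" "degc b Y b0 b1 b2 va vb v"
    using assms(3,4) unfolding x y by (simp_all add: hdeg_def)
  note R = secc_rules[OF sx] secc_rules[OF sy] PR
  show ?thesis using deg_cases[of a] deg_cases[of b] dg unfolding x y degc_def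
    by (elim disjE conjE) (simp_all add: R bracketE_def pm_def zero_prod_def fun_eq_iff algebra_simps)
qed

lemma deg_B: assumes "sec x" "sec y" "hdeg a x" "hdeg b y"
  shows "hdeg (a + b) (bracketE x y)"
proof -
  obtain X a0 a1 a2 ua ub u where x: "x = ((X, a0, a1, a2), (ua, ub), u)" and sx: "secc X a0 a1 a2 ua ub u"
    by (rule sec_obtain[OF assms(1)])
  obtain Y b0 b1 b2 va vb v where y: "y = ((Y, b0, b1, b2), (va, vb), v)" and sy: "secc Y b0 b1 b2 va vb v"
    by (rule sec_obtain[OF assms(2)])
  have dg: "degc a X a0 a1 a2 ua ub u" "degc b Y b0 b1 b2 va vb v"
    using assms(3,4) unfolding x y by (simp_all add: hdeg_def)
  note R = secc_rules[OF sx] secc_rules[OF sy] PR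
  show ?thesis using deg_cases[of a] deg_cases[of b] dg unfolding x y degc_def
    by (elim disjE conjE) (simp_all add: R hdeg_def degc_def bracketE_def fun_eq_iff)
qed

lemma deg_d: assumes "sec x" "hdeg a x"
  shows "hdeg (a - 1) (dE p1 p2 x)" "a = 0 \<Longrightarrow> dE p1 p2 x = 0"
proof -
  obtain X a0 a1 a2 ua ub u where x: "x = ((X, a0, a1, a2), (ua, ub), u)" and sx: "secc X a0 a1 a2 ua ub u"
    by (rule sec_obtain[OF assms(1)])
  have dg: "degc a X a0 a1 a2 ua ub u"
    using assms(2) unfolding x by (simp_all add: hdeg_def)
  note R = secc_rules[OF sx] PR
  show "hdeg (a - 1) (dE p1 p2 x)" using deg_cases[of a] dg unfolding x degc_def
    by (elim disjE conjE) (simp_all add: R hdeg_def degc_def dE_def fun_eq_iff)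
  show "a = 0 \<Longrightarrow> dE p1 p2 x = 0" using dg unfolding x degc_def
    by (simp add: R dE_def zero_prod_def fun_eq_iff)
qed

end


lemma perm_small: assumes "\<sigma> permutes {..<n::nat}" "p < n" shows "\<sigma> p < n"
  using permutes_in_image[OF assms(1)] assms(2) by auto

lemma perm_out: assumes "\<sigma> permutes {..<n::nat}" "n \<le> p" shows "\<sigma> p = p"
  using permutes_not_in[OF assms(1), of p] assms(2) by (meson lessThan_iff not_less)

lemma perm_inj': assumes "\<sigma> permutes S" "\<sigma> p = \<sigma> q" shows "p = q"
  using permutes_inj[OF assms(1)] assms(2) by (simp add: inj_eq)

lemma perm1: assumes "\<sigma> permutes {..<1::nat}" shows "\<sigma> = id"
proof
  fix p show "\<sigma> p = id p"
    using perm_small[OF assms, of 0] perm_out[OF assms, of p] by (cases "p = 0") auto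
qed

lemma perm2: assumes "\<sigma> permutes {..<2::nat}" shows "\<sigma> = id \<or> \<sigma> = transpose 0 1"
proof -
  have a: "\<sigma> 0 < 2" "\<sigma> 1 < 2" using perm_small[OF assms] by auto
  have b: "\<sigma> 0 \<noteq> \<sigma> 1" using perm_inj'[OF assms, of 0 1] by auto
  have c: "\<And>p. 2 \<le> p \<Longrightarrow> \<sigma> p = p" using perm_out[OF assms] by auto
  have d: "\<And>p::nat. p < 2 \<Longrightarrow> p = 0 \<or> p = 1" by auto
  show ?thesis
  proof (cases "\<sigma> 0 = 0")
    case True
    then have "\<sigma> 1 = 1" using a b by auto
    then have "\<sigma> = id" using True c d by (auto simp: fun_eq_iff) (metis not_le)
    then show ?thesis by simp
  next
    case False
    then have "\<sigma> 0 = 1" "\<sigma> 1 = 0" using a b by auto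
    then have "\<sigma> = transpose 0 1" using c d by (auto simp: fun_eq_iff transpose_def)
    then show ?thesis by simp
  qed
qed

definition cyc3 :: "nat \<Rightarrow> nat" where "cyc3 = transpose 0 1 \<circ> transpose 1 2"

lemma cyc3_vals: "cyc3 0 = 1" "cyc3 1 = 2" "cyc3 2 = 0" "cyc3 (Suc 0) = 2" "cyc3 (Suc (Suc 0)) = 0"
  by (simp_all add: cyc3_def transpose_def)

lemma perm3: assumes "\<sigma> permutes {..<3::nat}" "\<sigma> 0 < \<sigma> 1"
  shows "\<sigma> = id \<or> \<sigma> = transpose 1 2 \<or> \<sigma> = cyc3"
proof -
  have a: "\<sigma> 0 < 3" "\<sigma> 1 < 3" "\<sigma> 2 < 3" using perm_small[OF assms(1)] by auto
  have b: "\<sigma> 0 \<noteq> \<sigma> 2" "\<sigma> 1 \<noteq> \<sigma> 2" using perm_inj'[OF assms(1), of 0 2] perm_inj'[OF assms(1), of 1 2] by auto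
  have c: "\<And>p. 3 \<le> p \<Longrightarrow> \<sigma> p = p" using perm_out[OF assms(1)] by auto
  have d: "\<And>p::nat. p < 3 \<Longrightarrow> p = 0 \<or> p = 1 \<or> p = 2" by auto
  have "(\<sigma> 0 = 0 \<and> \<sigma> 1 = 1 \<and> \<sigma> 2 = 2) \<or> (\<sigma> 0 = 0 \<and> \<sigma> 1 = 2 \<and> \<sigma> 2 = 1) \<or> (\<sigma> 0 = 1 \<and> \<sigma> 1 = 2 \<and> \<sigma> 2 = 0)"
    using a b assms(2) by auto
  then show ?thesis
  proof (elim disjE conjE)
    assume "\<sigma> 0 = 0" "\<sigma> 1 = 1" "\<sigma> 2 = 2"
    then have "\<sigma> = id" using c d by (auto simp: fun_eq_iff) (metis not_le)
    then show ?thesis by simp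
  next
    assume "\<sigma> 0 = 0" "\<sigma> 1 = 2" "\<sigma> 2 = 1"
    then have "\<sigma> = transpose 1 2" using c d by (auto simp: fun_eq_iff transpose_def) (metis not_le)
    then show ?thesis by simp
  next
    assume "\<sigma> 0 = 1" "\<sigma> 1 = 2" "\<sigma> 2 = 0"
    then have "\<sigma> = cyc3" using c d by (auto simp: fun_eq_iff cyc3_def transpose_def)
    then show ?thesis by simp
  qed
qed

lemma lt1: "(q::nat) < 1 \<longleftrightarrow> q = 0" by auto
lemma lt2: "(q::nat) < 2 \<longleftrightarrow> q = 0 \<or> q = 1" by auto
lemma lt3: "(q::nat) < 3 \<longleftrightarrow> q = 0 \<or> q = 1 \<or> q = 2" by auto
lemma lt2': "(q::nat) < Suc (Suc 0) \<longleftrightarrow> q = 0 \<or> q = 1" by auto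
lemma lt3': "(q::nat) < Suc (Suc (Suc 0)) \<longleftrightarrow> q = 0 \<or> q = 1 \<or> q = 2" by auto

lemma uns11: "unshuffles 1 1 = {id}"
  using perm1 by (auto simp: unshuffles_def permutes_id)

lemma uns12: "unshuffles 1 2 = {id, transpose 0 1}"
  using perm2 by (auto simp: unshuffles_def permutes_id permutes_swap_id lt1 lt2)

lemma uns22: "unshuffles 2 2 = {id}"
proof -
  have "transpose 0 1 \<notin> unshuffles 2 2"
    by (auto simp: unshuffles_def transpose_def) (metis one_less_numeral_iff semiring_norm(76) zero_less_one)
  then show ?thesis using perm2
    by (auto simp: unshuffles_def permutes_id lt2)
qed

lemma cyc3_perm: "cyc3 permutes {..<3}"
  unfolding cyc3_def by (intro permutes_compose permutes_swap_id) auto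

lemma uns23: "unshuffles 2 3 = {id, transpose 1 2, cyc3}"
proof (intro set_eqI iffI)
  fix \<sigma> assume "\<sigma> \<in> unshuffles 2 3"
  then have "\<sigma> permutes {..<3}" "\<sigma> 0 < \<sigma> 1" by (auto simp: unshuffles_def)
  then show "\<sigma> \<in> {id, transpose 1 2, cyc3}" using perm3 by blast
next
  fix \<sigma> assume "\<sigma> \<in> {id, transpose 1 2, cyc3}"
  then show "\<sigma> \<in> unshuffles 2 3"
    by (auto simp: unshuffles_def permutes_id permutes_swap_id cyc3_perm lt2 lt3 lt2' lt3' cyc3_vals transpose_def)
qed

lemma sign_t: "sign (transpose (0::nat) 1) = -1" "sign (transpose (1::nat) 2) = -1"
  by (simp_all add: sign_swap_id)

lemma sign_cyc3: "sign cyc3 = 1"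
  unfolding cyc3_def by (simp add: sign_compose permutation_swap_id sign_swap_id)

lemma ne_perms: "transpose (0::nat) 1 \<noteq> id" "transpose (1::nat) 2 \<noteq> id" "cyc3 \<noteq> id" "cyc3 \<noteq> transpose 1 2"
  "id \<noteq> transpose (0::nat) 1" "id \<noteq> transpose (1::nat) 2" "id \<noteq> cyc3" "transpose 1 2 \<noteq> cyc3"
  by (auto simp: fun_eq_iff cyc3_def transpose_def)

lemma koszul_id: "koszul ds id = 1"
  unfolding koszul_def by (rule prod.neutral) auto

lemma koszul_t01: "koszul [a, b] (transpose 0 1) = (-1) ^ (b * a)"
proof -
  have "{(p, q). p < q \<and> q < length [a, b] \<and> transpose 0 1 q < transpose (0::nat) 1 p} = {(0, 1)}"
    by (auto simp: transpose_def lt2 lt2')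
  then show ?thesis by (simp add: koszul_def transpose_def)
qed

lemma koszul_t12: "koszul [a, b, c] (transpose 1 2) = (-1) ^ (c * b)"
proof -
  have "{(p, q). p < q \<and> q < length [a, b, c] \<and> transpose 1 2 q < transpose (1::nat) 2 p} = {(1, 2)}"
    by (auto simp: transpose_def lt3 lt3')
  then show ?thesis by (simp add: koszul_def transpose_def)
qed

lemma koszul_cyc3: "koszul [a, b, c] cyc3 = (-1) ^ (b * a) * (-1) ^ (c * a)"
proof -
  have "{(p, q). p < q \<and> q < length [a, b, c] \<and> cyc3 q < cyc3 p} = {(0, 2), (1, 2)}"
    by (auto simp: cyc3_vals lt3 lt3')
  then show ?thesis by (simp add: koszul_def cyc3_vals)
qed

lemma perm_list_id: "permute_list_by id xs = xs"
  by (simp add: permute_list_by_def map_nth)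

lemma perm_list_t01: "permute_list_by (transpose 0 1) [x, y] = [y, x]"
  by (simp add: permute_list_by_def transpose_def upt_rec)

lemma perm_list_t12: "permute_list_by (transpose 1 2) [x, y, z] = [x, z, y]"
  by (simp add: permute_list_by_def transpose_def upt_rec)

lemma perm_list_cyc3: "permute_list_by cyc3 [x, y, z] = [y, z, x]"
  by (simp add: permute_list_by_def cyc3_vals upt_rec)

lemma perm_list_nth: "i < length xs \<Longrightarrow> permute_list_by \<sigma> xs ! i = xs ! \<sigma> i"
  by (simp add: permute_list_by_def)

lemma perm_list_len: "length (permute_list_by \<sigma> xs) = length xs"
  by (simp add: permute_list_by_def)


lemma pm_0: "pm s 0 = 0" by (simp add: pm_def)

lemma lE_1: "lE p1 p2 1 xs = dE p1 p2 (xs ! 0)" by (simp add: lE_def)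
lemma lE_2: "lE p1 p2 2 xs = bracketE (xs ! 0) (xs ! 1)" by (simp add: lE_def)
lemma lE_other: "n \<noteq> 1 \<Longrightarrow> n \<noteq> 2 \<Longrightarrow> lE p1 p2 n xs = 0" by (simp add: lE_def)

lemmas SV = uns11[unfolded One_nat_def] uns12[unfolded One_nat_def] uns23[unfolded One_nat_def]
  ne_perms[unfolded One_nat_def] sign_t[unfolded One_nat_def] koszul_t01[unfolded One_nat_def]
  koszul_t12[unfolded One_nat_def] perm_list_t01[unfolded One_nat_def] perm_list_t12[unfolded One_nat_def]
  lE_1[unfolded One_nat_def] lE_2[unfolded numeral_2_eq_2] lE_2[unfolded numeral_2_eq_2 One_nat_def[symmetric]]
  uns22[unfolded numeral_2_eq_2] uns12[unfolded numeral_2_eq_2 One_nat_def]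

context cx3 begin

lemma jacobi_1: assumes "sec x" shows "jacobiator 3 (lE p1 p2) [x] [a] = 0"
proof -
  have I: "{i. 1 \<le> i \<and> i \<le> 1 \<and> i \<le> 3 + 1 \<and> 1 + 1 - i \<le> 3 + 1} = {1::nat}" by auto
  have L: "length [x] = 1" by simp
  show ?thesis unfolding jacobiator_def Let_def L I
    by (simp add: uns11 koszul_id perm_list_id lE_1 SV pm_def jac1[OF assms])
qed

lemma jacobi_2: assumes "sec x" "sec y" "hdeg a x" "hdeg b y"
  shows "jacobiator 3 (lE p1 p2) [x, y] [a, b] = 0"
proof -
  have I: "{i. 1 \<le> i \<and> i \<le> 2 \<and> i \<le> 3 + 1 \<and> 2 + 1 - i \<le> 3 + 1} = {1::nat, 2}" by auto
  have L: "length [x, y] = 2" by simp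
  show ?thesis unfolding jacobiator_def Let_def L I
    using jac2[OF assms]
    by (simp add: uns12 uns22 ne_perms koszul_id koszul_t01 sign_t perm_list_id perm_list_t01 lE_1 lE_2 SV algebra_simps)
qed

lemma jacobi_3: assumes "sec x" "sec y" "sec z" "hdeg a x" "hdeg b y" "hdeg c z"
  shows "jacobiator 3 (lE p1 p2) [x, y, z] [a, b, c] = 0"
proof -
  have I: "{i. 1 \<le> i \<and> i \<le> 3 \<and> i \<le> 3 + 1 \<and> 3 + 1 - i \<le> 3 + 1} = {1::nat, 2, 3}" by auto
  have L: "length [x, y, z] = 3" by simp
  show ?thesis unfolding jacobiator_def Let_def L I
    using jac3[OF assms]
    by (simp add: uns23 ne_perms koszul_id koszul_t12 koszul_cyc3 sign_t sign_cyc3 perm_list_id perm_list_t12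
        perm_list_cyc3 lE_1 lE_2 SV lE_other pm_0 d_0 algebra_simps)
qed

end


context cx3 begin

lemma jacobi_big: assumes "\<forall>w\<in>set xs. sec w" "4 \<le> length xs"
  shows "jacobiator 3 (lE p1 p2) xs ds = 0"
proof -
  have key: "lE p1 p2 (length xs + 1 - i) (lE p1 p2 i (take i (permute_list_by \<sigma> xs)) # drop i (permute_list_by \<sigma> xs)) = 0"
    if i: "1 \<le> i" "i \<le> length xs" "i \<le> 3 + 1" and \<sigma>: "\<sigma> \<in> unshuffles i (length xs)" for i \<sigma>
  proof -
    have sp: "\<sigma> permutes {..<length xs}" using \<sigma> by (simp add: unshuffles_def)
    show ?thesis
    proof (cases "i \<le> 2")
      case True then have "length xs + 1 - i \<ge> 3" using assms(2) by arith
      then show ?thesis by (simp add: lE_other)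
    next
      case False
      then have inner: "lE p1 p2 i (take i (permute_list_by \<sigma> xs)) = 0" by (simp add: lE_other)
      consider "length xs + 1 - i = 1" | "length xs + 1 - i = 2" | "length xs + 1 - i \<ge> 3" using i by arith
      then show ?thesis
      proof cases
        case 1 then show ?thesis unfolding 1 by (simp add: inner lE_1 SV d_0)
      next
        case 2
        then have il: "i < length xs" by arith
        have e: "drop i (permute_list_by \<sigma> xs) ! 0 = xs ! \<sigma> i"
          using il by (simp add: perm_list_nth perm_list_len)
        have "\<sigma> i < length xs" using perm_small[OF sp il] .
        then have "sec (xs ! \<sigma> i)" using assms(1) by simp
        then show ?thesis using 2 e by (simp add: inner lE_2 B_0l)
      next
        case 3 then show ?thesis by (simp add: lE_other)
      qed
    qed
  qed
  show ?thesis unfolding jacobiator_def Let_def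
    apply (intro sum.neutral ballI)
    subgoal for i \<sigma> using key[of i \<sigma>] by (auto simp: pm_0)
    done
qed

lemma sec_parts: assumes "secc X a0 a1 a2 ua ub u"
  shows "sec ((X, a0, a1, a2), (0, 0), 0)" "sec ((0, 0, 0, 0), (ua, ub), 0)" "sec ((0, 0, 0, 0), (0, 0), u)"
  using assms by (auto simp: sec_def secc_def vf0 der0 hom_zero' m0 m1 m2 PR)

lemma sections_eq: "sections 3 (GE sm0 sm1 sm2 p1 p2) = {x. sec x}"
proof (intro set_eqI iffI)
  fix x assume "x \<in> sections 3 (GE sm0 sm1 sm2 p1 p2)"
  then obtain xs where x: "x = (\<Sum>i<3. xs i)" and h: "\<forall>i<3. xs i \<in> GE sm0 sm1 sm2 p1 p2 i"
    by (auto simp: sections_def)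
  have "sec (xs 0)" "sec (xs 1)" "sec (xs 2)" using h by (auto simp: G_eq)
  moreover have "x = xs 0 + xs 1 + xs 2" unfolding x by (simp add: numeral_3_eq_3 numeral_2_eq_2)
  ultimately show "x \<in> {x. sec x}" by (simp add: sec_add)
next
  fix x assume "x \<in> {x. sec x}"
  then obtain X a0 a1 a2 ua ub u where x: "x = ((X, a0, a1, a2), (ua, ub), u)" and sx: "secc X a0 a1 a2 ua ub u"
    using sec_obtain by blast
  define xs where "xs = (\<lambda>i::nat. if i = 0 then ((X, a0, a1, a2), (0, 0), 0)
     else if i = 1 then ((0, 0, 0, 0), (ua, ub), 0) else ((0, 0, 0, 0), (0, 0), u))"
  have "\<forall>i<3. xs i \<in> GE sm0 sm1 sm2 p1 p2 i"
    using sec_parts[OF sx] by (auto simp: G_eq xs_def hdeg_def degc_def lt3)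
  moreover have "x = (\<Sum>i<3. xs i)" unfolding x by (simp add: numeral_3_eq_3 numeral_2_eq_2 xs_def)
  ultimately show "x \<in> sections 3 (GE sm0 sm1 sm2 p1 p2)" unfolding sections_def by blast
qed

lemma homog_G: "homog (GE sm0 sm1 sm2 p1 p2) xs ds \<longleftrightarrow> length ds = length xs \<and> (\<forall>j<length xs. sec (xs ! j) \<and> hdeg (ds ! j) (xs ! j))"
  by (simp add: homog_def G_eq)

theorem main: "strict_lie_3_algebroid (smE sm0 sm1 sm2) (GE sm0 sm1 sm2 p1 p2) anchorE (lE p1 p2)"
  unfolding strict_lie_3_algebroid_def split_lie_n_algebroid_def sections_eq
proof (intro conjI)
  show "is_module (smE sm0 sm1 sm2)" by (rule mod_smE)
  show "\<forall>i. 0 \<in> GE sm0 sm1 sm2 p1 p2 i \<and> (\<forall>x\<in>GE sm0 sm1 sm2 p1 p2 i. \<forall>y\<in>GE sm0 sm1 sm2 p1 p2 i. x + y \<in> GE sm0 sm1 sm2 p1 p2 i) \<and>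
      (\<forall>f. \<forall>x\<in>GE sm0 sm1 sm2 p1 p2 i. smE sm0 sm1 sm2 f x \<in> GE sm0 sm1 sm2 p1 p2 i)"
  proof (intro allI conjI ballI)
    fix i
    show "0 \<in> GE sm0 sm1 sm2 p1 p2 i" by (simp add: G_eq sec_0 hdeg_zero)
  next
    fix i x y assume "x \<in> GE sm0 sm1 sm2 p1 p2 i" "y \<in> GE sm0 sm1 sm2 p1 p2 i"
    then have a: "sec x" "sec y" "hdeg i x" "hdeg i y" by (auto simp: G_eq)
    have "hdeg i (x + y)" using a(3,4)
      by (cases x rule: ends_exhaust, cases y rule: ends_exhaust) (auto simp: hdeg_def degc_def)
    then show "x + y \<in> GE sm0 sm1 sm2 p1 p2 i" using a by (simp add: G_eq sec_add)
  next
    fix i f x assume "x \<in> GE sm0 sm1 sm2 p1 p2 i"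
    then have a: "sec x" "hdeg i x" by (auto simp: G_eq)
    have "hdeg i (smE sm0 sm1 sm2 f x)" using a(2)
      by (cases x rule: ends_exhaust) (auto simp: hdeg_def degc_def smE_def MR fun_eq_iff)
    then show "smE sm0 sm1 sm2 f x \<in> GE sm0 sm1 sm2 p1 p2 i" using a by (simp add: G_eq sec_sm)
  qed
  show "\<forall>i\<ge>3. GE sm0 sm1 sm2 p1 p2 i = {0}"
    using hdeg_big by (auto simp: G_eq sec_0 hdeg_zero)
  show "\<forall>xs. (\<forall>i<3. xs i \<in> GE sm0 sm1 sm2 p1 p2 i) \<and> (\<Sum>i<3. xs i) = 0 \<longrightarrow> (\<forall>i<3. xs i = 0)"
  proof (rule allI, rule impI)
    fix xs :: "nat \<Rightarrow> ('r, 'e0, 'e1, 'e2) ends"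
    assume h: "(\<forall>i<3. xs i \<in> GE sm0 sm1 sm2 p1 p2 i) \<and> (\<Sum>i<3. xs i) = 0"
    then have d: "hdeg 0 (xs 0)" "hdeg 1 (xs 1)" "hdeg 2 (xs 2)" by (auto simp: G_eq)
    have s: "xs 0 + xs 1 + xs 2 = 0" using h by (simp add: numeral_3_eq_3 numeral_2_eq_2)
    have "xs 0 = 0 \<and> xs 1 = 0 \<and> xs 2 = 0"
      using d s
      by (cases "xs 0" rule: ends_exhaust, cases "xs 1" rule: ends_exhaust, cases "xs 2" rule: ends_exhaust)
        (simp add: hdeg_def degc_def zero_prod_def)
    then show "\<forall>i<3. xs i = 0" by (auto simp: lt3)
  qed
  show "\<forall>x\<in>GE sm0 sm1 sm2 p1 p2 0. is_vector_field (anchorE x)"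
    by (auto simp: G_eq anchorE_def sec_def secc_def split: prod.splits)
  show "\<forall>x\<in>GE sm0 sm1 sm2 p1 p2 0. \<forall>y\<in>GE sm0 sm1 sm2 p1 p2 0. anchorE (x + y) = (\<lambda>f. anchorE x f + anchorE y f)"
    by (simp add: anchorE_def plus_fun_def)
  show "\<forall>g. \<forall>x\<in>GE sm0 sm1 sm2 p1 p2 0. anchorE (smE sm0 sm1 sm2 g x) = (\<lambda>f. g * anchorE x f)"
  proof (intro allI ballI)
    fix g x show "anchorE (smE sm0 sm1 sm2 g x) = (\<lambda>f. g * anchorE x f)"
      by (cases x rule: ends_exhaust) (simp add: smE_def anchorE_def)
  qed
  show "\<forall>i\<in>{1..3 + 1}. \<forall>xs. length xs = i \<and> set xs \<subseteq> {x. sec x} \<longrightarrow>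
        lE p1 p2 i xs \<in> {x. sec x} \<and>
        (\<forall>p<i. \<forall>y\<in>{x. sec x}. lE p1 p2 i (xs[p := xs ! p + y]) = lE p1 p2 i xs + lE p1 p2 i (xs[p := y])) \<and>
        (\<forall>p<i. \<forall>c. lE p1 p2 i (xs[p := smE sm0 sm1 sm2 (of_real c) (xs ! p)]) = smE sm0 sm1 sm2 (of_real c) (lE p1 p2 i xs)) \<and>
        (i \<noteq> 2 \<longrightarrow> (\<forall>p<i. \<forall>f. lE p1 p2 i (xs[p := smE sm0 sm1 sm2 f (xs ! p)]) = smE sm0 sm1 sm2 f (lE p1 p2 i xs)))"
  proof (intro ballI allI impI)
    fix i :: nat and xs :: "('r, 'e0, 'e1, 'e2) ends list"
    assume i: "i \<in> {1..3 + 1}" and h: "length xs = i \<and> set xs \<subseteq> {x. sec x}"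
    consider "i = 1" | "i = 2" | "i \<noteq> 1 \<and> i \<noteq> 2" by blast
    then show "lE p1 p2 i xs \<in> {x. sec x} \<and>
        (\<forall>p<i. \<forall>y\<in>{x. sec x}. lE p1 p2 i (xs[p := xs ! p + y]) = lE p1 p2 i xs + lE p1 p2 i (xs[p := y])) \<and>
        (\<forall>p<i. \<forall>c. lE p1 p2 i (xs[p := smE sm0 sm1 sm2 (of_real c) (xs ! p)]) = smE sm0 sm1 sm2 (of_real c) (lE p1 p2 i xs)) \<and>
        (i \<noteq> 2 \<longrightarrow> (\<forall>p<i. \<forall>f. lE p1 p2 i (xs[p := smE sm0 sm1 sm2 f (xs ! p)]) = smE sm0 sm1 sm2 f (lE p1 p2 i xs)))"
    proof cases
      case 1
      then obtain x where xs: "xs = [x]" using h by (auto simp: length_Suc_conv)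
      have sx: "sec x" using h xs by simp
      show ?thesis using 1 sx unfolding xs
        by (auto simp: lE_1 SV sec_d d_add d_sm lt1)
    next
      case 2
      then obtain x y where xs: "xs = [x, y]" using h by (auto simp: length_Suc_conv numeral_2_eq_2)
      have sx: "sec x" "sec y" using h xs by auto
      show ?thesis using 2 sx unfolding xs
        by (auto simp: lE_2 SV sec_B B_add1 B_add2 B_r1 B_r2 sec_sm lt2)
    next
      case 3
      then show ?thesis by (simp add: lE_other sec_0 smE_0)
    qed
  qed
  show "\<forall>i\<in>{1..3 + 1}. \<forall>xs ds. homog (GE sm0 sm1 sm2 p1 p2) xs ds \<and> length xs = i \<longrightarrow>
        (if 2 \<le> sum_list ds + i \<and> sum_list ds + i - 2 < 3
         then lE p1 p2 i xs \<in> GE sm0 sm1 sm2 p1 p2 (sum_list ds + i - 2) else lE p1 p2 i xs = 0)"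
  proof (intro ballI allI impI)
    fix i :: nat and xs :: "('r, 'e0, 'e1, 'e2) ends list" and ds
    assume i: "i \<in> {1..3 + 1}" and h: "homog (GE sm0 sm1 sm2 p1 p2) xs ds \<and> length xs = i"
    consider "i = 1" | "i = 2" | "i \<noteq> 1 \<and> i \<noteq> 2" by blast
    then show "if 2 \<le> sum_list ds + i \<and> sum_list ds + i - 2 < 3
         then lE p1 p2 i xs \<in> GE sm0 sm1 sm2 p1 p2 (sum_list ds + i - 2) else lE p1 p2 i xs = 0"
    proof cases
      case 1
      then obtain x where xs: "xs = [x]" using h by (auto simp: length_Suc_conv)
      obtain a where ds: "ds = [a]" using h 1 unfolding homog_def by (auto simp: length_Suc_conv)
      have sx: "sec x" "hdeg a x" using h unfolding xs ds homog_G by auto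
      show ?thesis unfolding xs ds 1 using deg_d[OF sx] sec_d[OF sx(1)] hdeg_big[of "a - 1" "dE p1 p2 x"]
        by (auto simp: lE_1 SV G_eq)
    next
      case 2
      then obtain x y where xs: "xs = [x, y]" using h by (auto simp: length_Suc_conv numeral_2_eq_2)
      obtain a b where ds: "ds = [a, b]" using h 2 unfolding homog_def by (auto simp: length_Suc_conv numeral_2_eq_2)
      have sx: "sec x" "sec y" "hdeg a x" "hdeg b y" using h unfolding xs ds homog_G by (auto simp: lt2)
      show ?thesis unfolding xs ds 2 using deg_B[OF sx] sec_B[OF sx(1,2)] hdeg_big[of "a + b" "bracketE x y"]
        by (auto simp: lE_2 SV G_eq)
    next
      case 3
      then show ?thesis by (simp add: lE_other G_eq sec_0 hdeg_zero)
    qed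
  qed
  show "\<forall>i\<in>{1..3 + 1}. \<forall>xs ds \<sigma>. homog (GE sm0 sm1 sm2 p1 p2) xs ds \<and> length xs = i \<and> \<sigma> permutes {..<i} \<longrightarrow>
        lE p1 p2 i (permute_list_by \<sigma> xs) = pm (sign \<sigma> * koszul ds \<sigma>) (lE p1 p2 i xs)"
  proof (intro ballI allI impI)
    fix i :: nat and xs :: "('r, 'e0, 'e1, 'e2) ends list" and ds \<sigma>
    assume i: "i \<in> {1..3 + 1}" and h: "homog (GE sm0 sm1 sm2 p1 p2) xs ds \<and> length xs = i \<and> \<sigma> permutes {..<i}"
    consider "i = 1" | "i = 2" | "i \<noteq> 1 \<and> i \<noteq> 2" by blast
    then show "lE p1 p2 i (permute_list_by \<sigma> xs) = pm (sign \<sigma> * koszul ds \<sigma>) (lE p1 p2 i xs)"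
    proof cases
      case 1
      then have "\<sigma> permutes {..<1}" using h by simp
      then have "\<sigma> = id" by (rule perm1)
      then show ?thesis by (simp add: perm_list_id koszul_id pm_def)
    next
      case 2
      then obtain x y where xs: "xs = [x, y]" using h by (auto simp: length_Suc_conv numeral_2_eq_2)
      obtain a b where ds: "ds = [a, b]" using h 2 unfolding homog_def by (auto simp: length_Suc_conv numeral_2_eq_2)
      have sx: "sec x" "sec y" "hdeg a x" "hdeg b y" using h unfolding xs ds homog_G by (auto simp: lt2)
      have "\<sigma> permutes {..<2}" using h 2 by simp
      then have "\<sigma> = id \<or> \<sigma> = transpose 0 1" by (rule perm2)
      then show ?thesis
      proof
        assume "\<sigma> = id" then show ?thesis by (simp add: perm_list_id koszul_id pm_def)
      next
        assume s: "\<sigma> = transpose 0 1"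
        show ?thesis unfolding s xs ds 2 using skew[OF sx]
          by (simp add: perm_list_t01 koszul_t01 sign_t lE_2 SV)
      qed
    next
      case 3
      then show ?thesis by (simp add: lE_other pm_0)
    qed
  qed
  show "\<forall>xs ds. homog (GE sm0 sm1 sm2 p1 p2) xs ds \<and> 1 \<le> length xs \<longrightarrow> jacobiator 3 (lE p1 p2) xs ds = 0"
  proof (intro allI impI)
    fix xs :: "('r, 'e0, 'e1, 'e2) ends list" and ds
    assume h: "homog (GE sm0 sm1 sm2 p1 p2) xs ds \<and> 1 \<le> length xs"
    have all: "\<forall>w\<in>set xs. sec w"
    proof
      fix w assume "w \<in> set xs"
      then obtain j where "j < length xs" "xs ! j = w" by (auto simp: in_set_conv_nth)
      then show "sec w" using h unfolding homog_G by blast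
    qed
    consider "length xs = 1" | "length xs = 2" | "length xs = 3" | "4 \<le> length xs" using h by arith
    then show "jacobiator 3 (lE p1 p2) xs ds = 0"
    proof cases
      case 1
      then obtain x where xs: "xs = [x]" by (auto simp: length_Suc_conv)
      obtain a where ds: "ds = [a]" using h 1 unfolding homog_def by (auto simp: length_Suc_conv)
      have sx: "sec x" using h unfolding xs ds homog_G by auto
      show ?thesis unfolding xs ds by (rule jacobi_1[OF sx])
    next
      case 2
      then obtain x y where xs: "xs = [x, y]" by (auto simp: length_Suc_conv numeral_2_eq_2)
      obtain a b where ds: "ds = [a, b]" using h 2 unfolding homog_def by (auto simp: length_Suc_conv numeral_2_eq_2)
      have sx: "sec x" "sec y" "hdeg a x" "hdeg b y" using h unfolding xs ds homog_G by (auto simp: lt2)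
      show ?thesis unfolding xs ds by (rule jacobi_2[OF sx])
    next
      case 3
      then obtain x y z where xs: "xs = [x, y, z]" by (auto simp: length_Suc_conv numeral_3_eq_3)
      obtain a b c where ds: "ds = [a, b, c]" using h 3 unfolding homog_def by (auto simp: length_Suc_conv numeral_3_eq_3)
      have sx: "sec x" "sec y" "sec z" "hdeg a x" "hdeg b y" "hdeg c z" using h unfolding xs ds homog_G by (auto simp: lt3)
      show ?thesis unfolding xs ds by (rule jacobi_3[OF sx])
    next
      case 4
      then show ?thesis by (rule jacobi_big[OF all])
    qed
  qed
  show "\<forall>x\<in>GE sm0 sm1 sm2 p1 p2 0. \<forall>y\<in>{x. sec x}. \<forall>f.
      lE p1 p2 2 [x, smE sm0 sm1 sm2 f y] = smE sm0 sm1 sm2 f (lE p1 p2 2 [x, y]) + smE sm0 sm1 sm2 (anchorE x f) y"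
    by (auto simp: G_eq lE_2 leib)
  show "\<forall>xs. set xs \<subseteq> {x. sec x} \<longrightarrow> lE p1 p2 3 xs = 0 \<and> lE p1 p2 4 xs = 0"
    by (simp add: lE_other)
qed

end

theorem theorem4p1:
  fixes sm0 :: "'r::{comm_ring_1,real_algebra_1} \<Rightarrow> 'e0::ab_group_add \<Rightarrow> 'e0"
    and sm1 :: "'r \<Rightarrow> 'e1::ab_group_add \<Rightarrow> 'e1"
    and sm2 :: "'r \<Rightarrow> 'e2::ab_group_add \<Rightarrow> 'e2"
    and p1 :: "'e1 \<Rightarrow> 'e0" and p2 :: "'e2 \<Rightarrow> 'e1"
  assumes "complex3 sm0 sm1 sm2 p1 p2"
  shows "strict_lie_3_algebroid (smE sm0 sm1 sm2) (GE sm0 sm1 sm2 p1 p2) anchorE (lE p1 p2)"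
  proof -
  interpret cx3 sm0 sm1 sm2 p1 p2 by (rule cx3.intro[OF assms])
  show ?thesis by (rule main)
qed

end
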